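(* Let $\Gamma\subseteq\mathbb R^n$ be an open convex set, $S\subseteq\Gamma$ a nonempty convex set, and $f:\Gamma\to\mathbb R$ a continuously differentiable function that is pseudoconvex on $\Gamma$. Let $\bar S=\arg\min\{f(x)\mid x\in S\}$ and $\bar x\in\bar S$. Define \[ \hat T_1:=\{x\in S\mid \nabla f(\bar x)^T(x-\bar x)=0,\ \exists\, p(x)>0:\ \nabla f(x)=p(x)\nabla f(\bar x)\}, \] \[ \hat T_2:=\{x\in S\mid \nabla f(\bar x)^T(x-\bar x)\le0,\ \exists\, p(x)>0:\ \nabla f(x)=p(x)\nabla f(\bar x)\}. \] Then $\bar S=\hat T_1=\hat T_2$.
   Context: A differentiable function $f$ on an open set $\Gamma$ is pseudoconvex on $\Gamma$ iff for all $x,y\in\Gamma$, $f(y)<f(x)$ implies $\nabla f(x)^T(y-x)<0$. *)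

theory Defs
  imports "HOL-Analysis.Analysis"
begin

definition pseudoconvex_on :: "(real^'n) set \<Rightarrow> (real^'n \<Rightarrow> real) \<Rightarrow> (real^'n \<Rightarrow> real^'n) \<Rightarrow> bool" where
  "pseudoconvex_on \<Gamma> f gf \<longleftrightarrow>
     (\<forall>x\<in>\<Gamma>. \<forall>y\<in>\<Gamma>. f y < f x \<longrightarrow> gf x \<bullet> (y - x) < 0)"

definition argmin_set :: "(real^'n \<Rightarrow> real) \<Rightarrow> (real^'n) set \<Rightarrow> (real^'n) set" where
  "argmin_set f S = {x \<in> S. \<forall>y\<in>S. f x \<le> f y}"

end

theory Submission
  imports Defs
begin

lemma dir_lemma:
  fixes f :: "real^'n \<Rightarrow> real"
  assumes G: "open G" "x \<in> G" and D: "(f has_derivative (\<lambda>h. g \<bullet> h)) (at x)"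
    and neg: "g \<bullet> v < 0" and e: "\<epsilon> > 0"
  shows "\<exists>t. 0<t \<and> t<\<epsilon> \<and> x + t *\<^sub>R v \<in> G \<and> f (x + t *\<^sub>R v) < f x"
proof -
  have i: "((\<lambda>t. x + t *\<^sub>R v) has_derivative (\<lambda>h. h *\<^sub>R v)) (at 0)"
    by (auto intro!: derivative_eq_intros)
  have D0: "(f has_derivative (\<lambda>h. g \<bullet> h)) (at ((\<lambda>t. x + t *\<^sub>R v) 0))" using D by simp
  have "((f \<circ> (\<lambda>t. x + t *\<^sub>R v)) has_derivative ((\<lambda>h. g \<bullet> h) \<circ> (\<lambda>h. h *\<^sub>R v))) (at 0)"
    by (rule diff_chain_at[OF i D0])
  hence "((\<lambda>t. f (x + t *\<^sub>R v)) has_derivative (\<lambda>h. (g \<bullet> v) * h)) (at 0)"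
    by (simp add: o_def mult.commute)
  hence "((\<lambda>t. f (x + t *\<^sub>R v)) has_field_derivative (g \<bullet> v)) (at 0)"
    by (simp add: has_field_derivative_def)
  hence L: "((\<lambda>t. (f (x + t *\<^sub>R v) - f x) / t) \<longlongrightarrow> g \<bullet> v) (at 0)"
    by (simp add: has_field_derivative_iff)
  hence "((\<lambda>t. (f (x + t *\<^sub>R v) - f x) / t) \<longlongrightarrow> g \<bullet> v) (at_right 0)"
    by (rule tendsto_mono[OF at_le, rotated]) simp
  hence ev1: "eventually (\<lambda>t. (f (x + t *\<^sub>R v) - f x) / t < 0) (at_right 0)"
    using neg by (rule order_tendstoD)
  have cont: "((\<lambda>t. x + t *\<^sub>R v) \<longlongrightarrow> x) (at_right (0::real))"
    by (rule tendsto_eq_intros | simp)+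
  have ev2: "eventually (\<lambda>t. x + t *\<^sub>R v \<in> G) (at_right 0)"
    using topological_tendstoD[OF cont G] .
  have ev3: "eventually (\<lambda>t::real. 0 < t \<and> t < \<epsilon>) (at_right 0)"
    using e by (simp add: eventually_at_right_field) (metis dist_real_def)
  have "eventually (\<lambda>t. (f (x + t *\<^sub>R v) - f x) / t < 0 \<and> x + t *\<^sub>R v \<in> G \<and> 0 < t \<and> t < \<epsilon>) (at_right 0)"
    using ev1 ev2 ev3 by eventually_elim auto
  then obtain t where t: "(f (x + t *\<^sub>R v) - f x) / t < 0" "x + t *\<^sub>R v \<in> G" "0 < t" "t < \<epsilon>"
    using eventually_happens[OF _ ] trivial_limit_at_right_real by blast
  from t(1,3) have "f (x + t *\<^sub>R v) < f x" by (simp add: divide_less_0_iff)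
  with t show ?thesis by blast
qed

lemma prop_lemma:
  fixes a b :: "real^'n"
  assumes a: "a \<noteq> 0" and H: "\<And>v. a \<bullet> v < 0 \<Longrightarrow> b \<bullet> v < 0"
  shows "\<exists>p>0. b = p *\<^sub>R a"
proof -
  define p where "p = (b \<bullet> a) / (a \<bullet> a)"
  define w where "w = b - p *\<^sub>R a"
  have aa: "a \<bullet> a > 0" using a by simp
  have wa: "w \<bullet> a = 0" using aa by (simp add: w_def p_def inner_diff_left)
  have b: "b = p *\<^sub>R a + w" by (simp add: w_def)
  have w0: "w = 0"
  proof (rule ccontr)
    assume "w \<noteq> 0"
    hence ww: "w \<bullet> w > 0" by simp
    define s where "s = (p * (a \<bullet> a) + 1) / (w \<bullet> w)"
    define v where "v = - a + s *\<^sub>R w"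
    have "a \<bullet> v = - (a \<bullet> a)" using wa by (simp add: v_def inner_diff_right inner_add_right inner_commute)
    hence "a \<bullet> v < 0" using aa by simp
    hence "b \<bullet> v < 0" by (rule H)
    moreover have "b \<bullet> v = - p * (a \<bullet> a) + s * (w \<bullet> w)"
      using wa by (simp add: b v_def inner_add_left inner_add_right inner_commute algebra_simps)
    moreover have "s * (w \<bullet> w) = p * (a \<bullet> a) + 1" using ww by (simp add: s_def)
    ultimately show False by simp
  qed
  have "b \<bullet> (-a) < 0" by (rule H) (use aa in simp)
  hence "p * (a \<bullet> a) > 0" using w0 b by simp
  hence "p > 0" using aa by (simp add: zero_less_mult_iff)
  thus ?thesis using w0 b by auto
qed

theorem corollary1:
  fixes \<Gamma> S :: "(real^'n) set" and f :: "real^'n \<Rightarrow> real"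
    and gf :: "real^'n \<Rightarrow> real^'n" and xbar :: "real^'n"
  assumes "open \<Gamma>" and "convex \<Gamma>"
    and "S \<subseteq> \<Gamma>" and "S \<noteq> {}" and "convex S"
    and grad: "\<And>x. x \<in> \<Gamma> \<Longrightarrow> (f has_derivative (\<lambda>h. gf x \<bullet> h)) (at x)"
    and "continuous_on \<Gamma> gf"
    and "pseudoconvex_on \<Gamma> f gf"
    and "xbar \<in> argmin_set f S"
  shows "argmin_set f S =
           {x \<in> S. gf xbar \<bullet> (x - xbar) = 0 \<and> (\<exists>p>0. gf x = p *\<^sub>R gf xbar)}
       \<and> argmin_set f S =
           {x \<in> S. gf xbar \<bullet> (x - xbar) \<le> 0 \<and> (\<exists>p>0. gf x = p *\<^sub>R gf xbar)}"
proof -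
  note G = assms(1)
  note SG = assms(3)
  note cS = assms(5)
  have ps: "\<And>x y. x \<in> \<Gamma> \<Longrightarrow> y \<in> \<Gamma> \<Longrightarrow> f y < f x \<Longrightarrow> gf x \<bullet> (y - x) < 0"
    using assms(8) unfolding pseudoconvex_on_def by blast
  have xb: "xbar \<in> S" "\<And>y. y \<in> S \<Longrightarrow> f xbar \<le> f y"
    using assms(9) unfolding argmin_set_def by auto
  define m where "m = f xbar"
  have AM: "\<And>a. a \<in> argmin_set f S \<longleftrightarrow> a \<in> S \<and> f a = m"
    using xb unfolding argmin_set_def m_def by (auto intro: order.antisym)
  have seg: "f (a + t *\<^sub>R (b - a)) = m"
    if a: "a \<in> argmin_set f S" and b: "b \<in> argmin_set f S" and t: "0 \<le> t" "t \<le> 1" for a b t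
  proof -
    have aS: "a \<in> S" "f a = m" and bS: "b \<in> S" "f b = m" using a b AM by auto
    define z where "z = a + t *\<^sub>R (b - a)"
    have z': "z = (1 - t) *\<^sub>R a + t *\<^sub>R b" by (simp add: z_def algebra_simps)
    have zS: "z \<in> S" using cS aS bS t unfolding z' by (simp add: convex_def)
    hence "f z \<ge> m" using xb m_def by auto
    moreover have "\<not> f z > m"
    proof
      assume fz: "f z > m"
      have zG: "z \<in> \<Gamma>" using zS SG by auto
      have 1: "gf z \<bullet> (a - z) < 0" using ps[OF zG _ ] aS SG fz by auto
      have 2: "gf z \<bullet> (b - z) < 0" using ps[OF zG _ ] bS SG fz by auto
      have e1: "a - z = (- t) *\<^sub>R (b - a)" by (simp add: z_def)
      have e2: "b - z = (1 - t) *\<^sub>R (b - a)" by (simp add: z_def algebra_simps)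
      have "- t * (gf z \<bullet> (b - a)) < 0" using 1 e1 by simp
      moreover have "(1 - t) * (gf z \<bullet> (b - a)) < 0" using 2 e2 by simp
      ultimately have c1: "0 < t * (gf z \<bullet> (b - a))" and c2: "(1 - t) * (gf z \<bullet> (b - a)) < 0" by simp_all
      from c1 t have "gf z \<bullet> (b - a) > 0" by (simp add: zero_less_mult_iff)
      moreover from c2 t have "gf z \<bullet> (b - a) < 0" by (simp add: mult_less_0_iff)
      ultimately show False by simp
    qed
    ultimately show ?thesis by (simp add: z_def)
  qed
  have orth: "gf a \<bullet> (b - a) = 0"
    if a: "a \<in> argmin_set f S" and b: "b \<in> argmin_set f S" for a b
  proof -
    have aS: "a \<in> S" "f a = m" using a AM by auto
    have aG: "a \<in> \<Gamma>" using aS SG by auto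
    show ?thesis
    proof (rule ccontr)
      assume ne: "gf a \<bullet> (b - a) \<noteq> 0"
      show False
      proof (cases "gf a \<bullet> (b - a) < 0")
        case True
        then obtain t where t: "0 < t" "t < 1" "f (a + t *\<^sub>R (b - a)) < f a"
          using dir_lemma[OF G aG grad[OF aG], of "b - a" 1] by auto
        thus False using seg[OF a b, of t] aS by simp
      next
        case False
        with ne have pos: "gf a \<bullet> (b - a) > 0" by simp
        have D: "((\<lambda>x. - f x) has_derivative (\<lambda>h. (- gf a) \<bullet> h)) (at a)"
          using has_derivative_minus[OF grad[OF aG]] by simp
        obtain t where t: "0 < t" "t < 1" "- f (a + t *\<^sub>R (b - a)) < - f a"
          using dir_lemma[OF G aG D, of "b - a" 1] pos by auto
        thus False using seg[OF a b, of t] aS by simp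
      qed
    qed
  qed
  have half: "gf b \<bullet> v < 0"
    if a: "a \<in> argmin_set f S" and b: "b \<in> argmin_set f S" and v: "gf a \<bullet> v < 0" for a b v
  proof -
    have aS: "a \<in> S" "f a = m" and bS: "b \<in> S" "f b = m" using a b AM by auto
    have aG: "a \<in> \<Gamma>" and bG: "b \<in> \<Gamma>" using aS bS SG by auto
    obtain t where t: "0 < t" "a + t *\<^sub>R v \<in> \<Gamma>" "f (a + t *\<^sub>R v) < f a"
      using dir_lemma[OF G aG grad[OF aG] v, of 1] by auto
    have "gf b \<bullet> ((a + t *\<^sub>R v) - b) < 0" using ps[OF bG t(2)] t(3) aS bS by simp
    moreover have "gf b \<bullet> ((a + t *\<^sub>R v) - b) = gf b \<bullet> (a - b) + t * (gf b \<bullet> v)"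
      by (simp add: algebra_simps inner_add_right inner_diff_right)
    moreover have "gf b \<bullet> (a - b) = 0" using orth[OF b a] .
    ultimately have "t * (gf b \<bullet> v) < 0" by simp
    thus ?thesis using t(1) by (simp add: mult_less_0_iff)
  qed
  have xbA: "xbar \<in> argmin_set f S" by (rule assms(9))
  have sub1: "argmin_set f S \<subseteq> {x \<in> S. gf xbar \<bullet> (x - xbar) = 0 \<and> (\<exists>p>0. gf x = p *\<^sub>R gf xbar)}"
  proof
    fix x assume x: "x \<in> argmin_set f S"
    have xS: "x \<in> S" using x AM by auto
    have o: "gf xbar \<bullet> (x - xbar) = 0" by (rule orth[OF xbA x])
    have "\<exists>p>0. gf x = p *\<^sub>R gf xbar"
    proof (cases "gf xbar = 0")
      case True
      have "gf x = 0"
      proof (rule ccontr)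
        assume "gf x \<noteq> 0"
        hence "gf x \<bullet> (- gf x) < 0" by simp
        from half[OF x xbA this] True show False by simp
      qed
      thus ?thesis using True by (intro exI[of _ 1]) simp
    next
      case False
      show ?thesis by (rule prop_lemma[OF False half[OF xbA x]])
    qed
    thus "x \<in> {x \<in> S. gf xbar \<bullet> (x - xbar) = 0 \<and> (\<exists>p>0. gf x = p *\<^sub>R gf xbar)}"
      using xS o by simp
  qed
  have sub2: "{x \<in> S. gf xbar \<bullet> (x - xbar) \<le> 0 \<and> (\<exists>p>0. gf x = p *\<^sub>R gf xbar)} \<subseteq> argmin_set f S"
  proof
    fix x assume "x \<in> {x \<in> S. gf xbar \<bullet> (x - xbar) \<le> 0 \<and> (\<exists>p>0. gf x = p *\<^sub>R gf xbar)}"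
    then obtain p where x: "x \<in> S" "gf xbar \<bullet> (x - xbar) \<le> 0" "p > 0" "gf x = p *\<^sub>R gf xbar" by auto
    have "\<not> f xbar < f x"
    proof
      assume lt: "f xbar < f x"
      have "gf x \<bullet> (xbar - x) < 0" using ps[OF _ _ lt] x(1) xb(1) SG by auto
      hence "p * (gf xbar \<bullet> (xbar - x)) < 0" using x(4) by simp
      hence "gf xbar \<bullet> (xbar - x) < 0" using x(3) by (simp add: mult_less_0_iff)
      moreover have "gf xbar \<bullet> (xbar - x) = - (gf xbar \<bullet> (x - xbar))"
        by (simp add: inner_diff_right)
      ultimately show False using x(2) by simp
    qed
    hence "f x = m" using xb x(1) m_def by fastforce
    thus "x \<in> argmin_set f S" using AM x(1) by simp
  qed
  have sub3: "{x \<in> S. gf xbar \<bullet> (x - xbar) = 0 \<and> (\<exists>p>0. gf x = p *\<^sub>R gf xbar)}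
     \<subseteq> {x \<in> S. gf xbar \<bullet> (x - xbar) \<le> 0 \<and> (\<exists>p>0. gf x = p *\<^sub>R gf xbar)}" by auto
  show ?thesis
    using subset_antisym[OF sub1 order_trans[OF sub3 sub2]] subset_antisym[OF order_trans[OF sub1 sub3] sub2]
    by (rule conjI)
qed

end
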